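(* Assume $\mathbb Q\subset k$ and let $R$ be a $k$-algebra. Then for every $r\in\mathcal U^p(R;\Delta)$ one has $\varepsilon(r)\in R[[{\bf s}]]_{\Delta,+}$ and $\boldsymbol\varepsilon(r):=(\varepsilon^1(r),\dots,\varepsilon^p(r))\in\mathbb H^p(R;\Delta)$, $\boldsymbol\Sigma\circ\boldsymbol\varepsilon=\varepsilon$, and the three maps $$\boldsymbol\varepsilon:\mathcal U^p(R;\Delta)\to\mathbb H^p(R;\Delta),\qquad \varepsilon:\mathcal U^p(R;\Delta)\to R[[{\bf s}]]_{\Delta,+},\qquad \boldsymbol\Sigma:\mathbb H^p(R;\Delta)\to R[[{\bf s}]]_{\Delta,+}$$ are bijective.
   Context: $k$ is a commutative ring; ${\bf s}=\{s_1,\dots,s_p\}$ commuting variables, ${\bf s}^\alpha=s_1^{\alpha_1}\cdots s_p^{\alpha_p}$. A co-ideal is a non-empty $\Delta\subset\mathbb N^p$ with $\alpha\in\Delta,\alpha'\le\alpha$ (componentwise) $\Rightarrow\alpha'\in\Delta$. For a ring $R$, $R[[{\bf s}]]_\Delta$ is the ring of formal sums $\sum_{\alpha\in\Delta}r_\alpha{\bf s}^\alpha$ with truncated product $\sum_\alpha(\sum_{\beta+\gamma=\alpha}r_\beta r'_\gamma){\bf s}^\alpha$ (variables central); $R[[{\bf s}]]_{\Delta,+}$ is the set of those with zero constant coefficient. $\mathcal U^p(R;\Delta)$ is the multiplicative group of $r\in R[[{\bf s}]]_\Delta$ with $r_0=1$; $r^*$ is the inverse. $\chi^i_R(\sum r_\alpha{\bf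 s}^\alpha)=\sum\alpha_ir_\alpha{\bf s}^\alpha$, $\boldsymbol\chi_R(\sum r_\alpha{\bf s}^\alpha)=\sum|\alpha|r_\alpha{\bf s}^\alpha$ where $|\alpha|=\alpha_1+\dots+\alpha_p$; $\varepsilon^i(r)=r^*\chi^i_R(r)$ and $\varepsilon(r)=r^*\boldsymbol\chi_R(r)$. $\mathbb H^p(R;\Delta)$ is the set of $p$-tuples $(\delta^1,\dots,\delta^p)\in(R[[{\bf s}]]_{\Delta,+})^p$, $\delta^i=\sum_\alpha\delta^i_\alpha{\bf s}^\alpha$, such that (a) $\delta^i_\alpha=0$ whenever $\alpha_i=0$, and (b) $\chi^j_R(\delta^i)-\chi^i_R(\delta^j)=[\delta^i,\delta^j]$ for all $i,j$. The map $\boldsymbol\Sigma$ sends $(\delta^1,\dots,\delta^p)$ to $\sum_i\delta^i$. *)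

theory Defs
  imports Complex_Main
begin

text \<open>Multi-indices alpha in N^p are lists of naturals of length p; the variable
  index i ranges over 0..<p (paper: 1..p).\<close>

definition coideal :: "nat \<Rightarrow> nat list set \<Rightarrow> bool" where
  "coideal p \<Delta> \<longleftrightarrow> \<Delta> \<noteq> {} \<and> (\<forall>\<alpha>\<in>\<Delta>. length \<alpha> = p) \<and>
     (\<forall>\<alpha>\<in>\<Delta>. \<forall>\<beta>. list_all2 (\<le>) \<beta> \<alpha> \<longrightarrow> \<beta> \<in> \<Delta>)"

definition series :: "nat list set \<Rightarrow> (nat list \<Rightarrow> 'r::ring_1) set" where
  "series \<Delta> = {f. \<forall>\<alpha>. \<alpha> \<notin> \<Delta> \<longrightarrow> f \<alpha> = 0}"

definition series_plus :: "nat \<Rightarrow> nat list set \<Rightarrow> (nat list \<Rightarrow> 'r::ring_1) set" where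
  "series_plus p \<Delta> = {f \<in> series \<Delta>. f (replicate p 0) = 0}"

definition ps_mult :: "nat list set \<Rightarrow> (nat list \<Rightarrow> 'r::ring_1) \<Rightarrow> (nat list \<Rightarrow> 'r) \<Rightarrow> (nat list \<Rightarrow> 'r)" where
  "ps_mult \<Delta> f g = (\<lambda>\<alpha>. if \<alpha> \<in> \<Delta>
      then (\<Sum>\<beta>\<in>{\<beta>. list_all2 (\<le>) \<beta> \<alpha>}. f \<beta> * g (map2 (-) \<alpha> \<beta>)) else 0)"

definition ps_one :: "nat list set \<Rightarrow> (nat list \<Rightarrow> 'r::ring_1)" where
  "ps_one \<Delta> = (\<lambda>\<alpha>. if \<alpha> \<in> \<Delta> \<and> (\<forall>i\<in>set \<alpha>. i = 0) then 1 else 0)"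

definition units_U :: "nat \<Rightarrow> nat list set \<Rightarrow> (nat list \<Rightarrow> 'r::ring_1) set" where
  "units_U p \<Delta> = {r \<in> series \<Delta>. r (replicate p 0) = 1}"

definition ps_inv :: "nat list set \<Rightarrow> (nat list \<Rightarrow> 'r::ring_1) \<Rightarrow> (nat list \<Rightarrow> 'r)" where
  "ps_inv \<Delta> r = (THE s. s \<in> series \<Delta> \<and> ps_mult \<Delta> r s = ps_one \<Delta> \<and> ps_mult \<Delta> s r = ps_one \<Delta>)"

definition chi :: "nat \<Rightarrow> (nat list \<Rightarrow> 'r::ring_1) \<Rightarrow> (nat list \<Rightarrow> 'r)" where
  "chi i f = (\<lambda>\<alpha>. of_nat (\<alpha> ! i) * f \<alpha>)"

definition chi_tot :: "(nat list \<Rightarrow> 'r::ring_1) \<Rightarrow> (nat list \<Rightarrow> 'r)" where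
  "chi_tot f = (\<lambda>\<alpha>. of_nat (sum_list \<alpha>) * f \<alpha>)"

definition eps_i :: "nat \<Rightarrow> nat list set \<Rightarrow> (nat list \<Rightarrow> 'r::ring_1) \<Rightarrow> (nat list \<Rightarrow> 'r)" where
  "eps_i i \<Delta> r = ps_mult \<Delta> (ps_inv \<Delta> r) (chi i r)"

definition eps :: "nat list set \<Rightarrow> (nat list \<Rightarrow> 'r::ring_1) \<Rightarrow> (nat list \<Rightarrow> 'r)" where
  "eps \<Delta> r = ps_mult \<Delta> (ps_inv \<Delta> r) (chi_tot r)"

definition bold_eps :: "nat \<Rightarrow> nat list set \<Rightarrow> (nat list \<Rightarrow> 'r::ring_1) \<Rightarrow> (nat list \<Rightarrow> 'r) list" where
  "bold_eps p \<Delta> r = map (\<lambda>i. eps_i i \<Delta> r) [0..<p]"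

definition ps_bracket :: "nat list set \<Rightarrow> (nat list \<Rightarrow> 'r::ring_1) \<Rightarrow> (nat list \<Rightarrow> 'r) \<Rightarrow> (nat list \<Rightarrow> 'r)" where
  "ps_bracket \<Delta> f g = (\<lambda>\<alpha>. ps_mult \<Delta> f g \<alpha> - ps_mult \<Delta> g f \<alpha>)"

definition HS :: "nat \<Rightarrow> nat list set \<Rightarrow> (nat list \<Rightarrow> 'r::ring_1) list set" where
  "HS p \<Delta> = {ds. length ds = p \<and> (\<forall>i<p. ds ! i \<in> series_plus p \<Delta>) \<and>
      (\<forall>i<p. \<forall>\<alpha>. \<alpha> ! i = 0 \<longrightarrow> (ds ! i) \<alpha> = 0) \<and>
      (\<forall>i<p. \<forall>j<p. (\<lambda>\<alpha>. chi j (ds ! i) \<alpha> - chi i (ds ! j) \<alpha>) = ps_bracket \<Delta> (ds ! i) (ds ! j))}"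

definition Sigma_map :: "nat \<Rightarrow> (nat list \<Rightarrow> 'r::ring_1) list \<Rightarrow> (nat list \<Rightarrow> 'r)" where
  "Sigma_map p ds = (\<lambda>\<alpha>. \<Sum>i<p. (ds ! i) \<alpha>)"

end

theory Submission imports Defs "HOL-Library.Function_Algebras" begin



lemma la2: "list_all2 (\<le>) b (a::nat list) \<longleftrightarrow> length b = length a \<and> (\<forall>i<length a. b!i \<le> a!i)"
  by (auto simp: list_all2_conv_all_nth)

lemma D_finite: "finite {b. list_all2 (\<le>) b (a::nat list)}"
proof -
  have "{b. list_all2 (\<le>) b a} \<subseteq> {xs. set xs \<subseteq> {0..sum_list a} \<and> length xs = length a}"
  proof safe
    fix b x assume b: "list_all2 (\<le>) b a" and x: "x \<in> set b"
    then obtain i where i: "i < length b" "x = b!i" by (auto simp: in_set_conv_nth)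
    have "x \<le> a!i" using b i by (auto simp: la2)
    also have "a!i \<le> sum_list a" using i b
      by (metis elem_le_sum_list la2)
    finally show "x \<in> {0..sum_list a}" by simp
  qed (auto simp: la2)
  thus ?thesis by (rule finite_subset) (rule finite_lists_length_eq, simp)
qed

lemma map2_nth[simp]: "i < length a \<Longrightarrow> i < length b \<Longrightarrow> map2 f a b ! i = f (a!i) (b!i)"
  by simp

lemma sum_list_sub: "list_all2 (\<le>) b (a::nat list) \<Longrightarrow> sum_list (map2 (-) a b) + sum_list b = sum_list a"
proof -
  assume h: "list_all2 (\<le>) b a"
  hence l: "length b = length a" and le: "\<forall>i<length a. b!i \<le> a!i" by (auto simp: la2)
  have "sum_list (map2 (-) a b) + sum_list b = (\<Sum>i=0..<length a. (a!i - b!i) + b!i)"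
    using l by (simp add: sum_list_sum_nth sum.distrib)
  also have "\<dots> = (\<Sum>i=0..<length a. a!i)" using le by (intro sum.cong) auto
  finally show ?thesis by (simp add: sum_list_sum_nth)
qed

lemma sum_list_less: "list_all2 (\<le>) b (a::nat list) \<Longrightarrow> b \<noteq> a \<Longrightarrow> sum_list b < sum_list a"
proof -
  assume h: "list_all2 (\<le>) b a" "b \<noteq> a"
  hence l: "length b = length a" and le: "\<forall>i<length a. b!i \<le> a!i" by (auto simp: la2)
  then obtain i where i: "i < length a" "b!i \<noteq> a!i" using h(2) nth_equalityI by metis
  have "(\<Sum>i=0..<length a. b!i) < (\<Sum>i=0..<length a. a!i)"
    by (rule sum_strict_mono_ex1) (use le i in \<open>auto intro!: bexI[of _ i] le_neq_implies_less\<close>)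
  thus ?thesis using l by (simp add: sum_list_sum_nth)
qed

lemma sum_list_zero_iff: "sum_list (a::nat list) = 0 \<longleftrightarrow> a = replicate (length a) 0"
  by (metis (mono_tags, lifting) in_set_replicate replicate_length_same sum_list_eq_0_iff)




locale CI = fixes p :: nat and \<Delta> :: "nat list set" assumes cD: "coideal p \<Delta>"
begin

abbreviation z :: "nat list" where "z \<equiv> replicate p 0"
abbreviation D :: "nat list \<Rightarrow> nat list set" where "D a \<equiv> {b. list_all2 (\<le>) b a}"
abbreviation pm :: "(nat list \<Rightarrow> 'r::ring_1) \<Rightarrow> (nat list \<Rightarrow> 'r) \<Rightarrow> (nat list \<Rightarrow> 'r)" (infixl "\<odot>" 70)
  where "f \<odot> g \<equiv> ps_mult \<Delta> f g"

lemma mem_len: "a \<in> \<Delta> \<Longrightarrow> length a = p" using cD by (auto simp: coideal_def)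
lemma down: "a \<in> \<Delta> \<Longrightarrow> list_all2 (\<le>) b a \<Longrightarrow> b \<in> \<Delta>" using cD by (auto simp: coideal_def)
lemma z_in: "z \<in> \<Delta>"
proof -
  obtain a where "a \<in> \<Delta>" using cD by (auto simp: coideal_def)
  thus ?thesis using down[of a z] mem_len[of a] by (auto simp: la2)
qed
lemma sub_le: "list_all2 (\<le>) b a \<Longrightarrow> list_all2 (\<le>) (map2 (-) a b) (a::nat list)"
  by (auto simp: la2)
lemma sub_in: "a \<in> \<Delta> \<Longrightarrow> list_all2 (\<le>) b a \<Longrightarrow> map2 (-) a b \<in> \<Delta>"
  using down sub_le by blast
lemma zero_iff: "a \<in> \<Delta> \<Longrightarrow> (\<forall>i\<in>set a. i = 0) \<longleftrightarrow> a = z"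
  using mem_len[of a] by (metis replicate_length_same in_set_replicate)
lemma D_z: "D z = {z}" by (auto simp: la2 intro!: nth_equalityI)
lemma z_in_D: "a \<in> \<Delta> \<Longrightarrow> z \<in> D a" using mem_len by (auto simp: la2)
lemma sub_z: "a \<in> \<Delta> \<Longrightarrow> map2 (-) a z = a" using mem_len by (auto intro!: nth_equalityI)
lemma sub_self: "a \<in> \<Delta> \<Longrightarrow> map2 (-) a a = z" using mem_len by (auto intro!: nth_equalityI)
lemma self_in_D: "a \<in> D a" by (auto simp: la2)

lemma pm_out: "a \<notin> \<Delta> \<Longrightarrow> (f \<odot> g) a = 0" by (simp add: ps_mult_def)
lemma pm_in: "a \<in> \<Delta> \<Longrightarrow> (f \<odot> g) a = (\<Sum>b\<in>D a. f b * g (map2 (-) a b))" by (simp add: ps_mult_def)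

lemma assoc: "(f \<odot> g) \<odot> h = f \<odot> (g \<odot> h)"
proof (rule ext)
  fix a
  show "((f \<odot> g) \<odot> h) a = (f \<odot> (g \<odot> h)) a"
  proof (cases "a \<in> \<Delta>")
    case False thus ?thesis by (simp add: pm_out)
  next
    case a: True
    have "((f \<odot> g) \<odot> h) a = (\<Sum>b\<in>D a. (\<Sum>c\<in>D b. f c * g (map2 (-) b c)) * h (map2 (-) a b))"
      using a by (simp add: pm_in down)
    also have "\<dots> = (\<Sum>b\<in>D a. \<Sum>c\<in>D b. f c * g (map2 (-) b c) * h (map2 (-) a b))"
      by (simp add: sum_distrib_right)
    also have "\<dots> = (\<Sum>(b,c)\<in>Sigma (D a) D. f c * g (map2 (-) b c) * h (map2 (-) a b))"
      by (rule sum.Sigma) (auto simp: D_finite)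
    also have "\<dots> = (\<Sum>(c,d)\<in>Sigma (D a) (\<lambda>c. D (map2 (-) a c)). f c * (g d * h (map2 (-) (map2 (-) a c) d)))"
    proof (rule sum.reindex_bij_witness[where i="\<lambda>(c,d). (map2 (+) c d, c)" and j="\<lambda>(b,c). (c, map2 (-) b c)"])
      fix x assume "x \<in> Sigma (D a) D" thus "(case case x of (b, c) \<Rightarrow> (c, map2 (-) b c) of (c, d) \<Rightarrow> (map2 (+) c d, c)) = x"
        by (auto simp: la2 intro!: nth_equalityI)
    next
      fix x assume "x \<in> Sigma (D a) D" thus "(case x of (b, c) \<Rightarrow> (c, map2 (-) b c)) \<in> Sigma (D a) (\<lambda>c. D (map2 (-) a c))"
        by (auto simp: la2 intro!: nth_equalityI) (metis order.trans)+
    next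
      fix x assume "x \<in> Sigma (D a) (\<lambda>c. D (map2 (-) a c))"
      thus "(case case x of (c, d) \<Rightarrow> (map2 (+) c d, c) of (b, c) \<Rightarrow> (c, map2 (-) b c)) = x"
        by (auto simp: la2 intro!: nth_equalityI)
    next
      fix x assume "x \<in> Sigma (D a) (\<lambda>c. D (map2 (-) a c))"
      thus "(case x of (c, d) \<Rightarrow> (map2 (+) c d, c)) \<in> Sigma (D a) D"
        by (auto simp: la2 intro!: nth_equalityI) (metis add.commute le_diff_conv2)
    next
      fix x assume "x \<in> Sigma (D a) D"
      moreover have "map2 (-) (map2 (-) a c) (map2 (-) b c) = map2 (-) a b" if "list_all2 (\<le>) b a" "list_all2 (\<le>) c b" for b c
        using that by (auto simp: la2 intro!: nth_equalityI)
      ultimately show "(case case x of (b, c) \<Rightarrow> (c, map2 (-) b c) of (c, d) \<Rightarrow> f c * (g d * h (map2 (-) (map2 (-) a c) d))) =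
         (case x of (b, c) \<Rightarrow> f c * g (map2 (-) b c) * h (map2 (-) a b))"
        by (auto simp: mult.assoc)
    qed
    also have "\<dots> = (\<Sum>c\<in>D a. \<Sum>d\<in>D (map2 (-) a c). f c * (g d * h (map2 (-) (map2 (-) a c) d)))"
      by (rule sum.Sigma[symmetric]) (auto simp: D_finite)
    also have "\<dots> = (f \<odot> (g \<odot> h)) a"
      using a by (simp add: pm_in sub_in sum_distrib_left)
    finally show ?thesis .
  qed
qed

end


context CI begin

lemma series_out: "f \<in> series \<Delta> \<Longrightarrow> a \<notin> \<Delta> \<Longrightarrow> f a = 0" by (simp add: series_def)
lemma pm_series[simp]: "f \<odot> g \<in> series \<Delta>" by (simp add: series_def ps_mult_def)

lemma add_right: "f \<odot> (g + h) = f \<odot> g + f \<odot> h"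
  by (rule ext) (simp add: ps_mult_def distrib_left sum.distrib)
lemma add_left: "(f + g) \<odot> h = f \<odot> h + g \<odot> h"
  by (rule ext) (simp add: ps_mult_def distrib_right sum.distrib)
lemma diff_right: "f \<odot> (g - h) = f \<odot> g - f \<odot> h"
  by (rule ext) (simp add: ps_mult_def right_diff_distrib sum_subtractf)
lemma diff_left: "(f - g) \<odot> h = f \<odot> h - g \<odot> h"
  by (rule ext) (simp add: ps_mult_def left_diff_distrib sum_subtractf)
lemma uminus_right: "f \<odot> (- g) = - (f \<odot> g)"
  by (rule ext) (simp add: ps_mult_def sum_negf)
lemma uminus_left: "(- f) \<odot> g = - (f \<odot> g)"
  by (rule ext) (simp add: ps_mult_def sum_negf)
lemma zero_right[simp]: "f \<odot> 0 = 0"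
  by (rule ext) (simp add: ps_mult_def)
lemma zero_left[simp]: "0 \<odot> f = 0"
  by (rule ext) (simp add: ps_mult_def)
lemma sum_right: "f \<odot> (\<lambda>a. \<Sum>j\<in>J. g j a) = (\<lambda>a. \<Sum>j\<in>J. (f \<odot> g j) a)"
  by (rule ext) (simp add: ps_mult_def sum_distrib_left sum.swap[of _ J])
lemma sum_left: "(\<lambda>a. \<Sum>j\<in>J. g j a) \<odot> f = (\<lambda>a. \<Sum>j\<in>J. (g j \<odot> f) a)"
  by (rule ext) (simp add: ps_mult_def sum_distrib_right sum.swap[of _ J])

lemma ofn: "x * (of_nat k * y) = of_nat k * (x * (y::'a::ring_1))"
  by (metis mult.assoc mult_of_nat_commute)
lemma ofn2: "of_nat a * (of_nat b * x) = of_nat b * (of_nat a * (x::'a::ring_1))"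
  by (metis mult.assoc mult_of_nat_commute)

lemma one_eq: "list_all2 (\<le>) a b \<Longrightarrow> b \<in> \<Delta> \<Longrightarrow> ps_one \<Delta> a = (if a = z then 1 else 0)"
  using down[of b a] zero_iff[of a] z_in by (auto simp: ps_one_def)

lemma one_left: "g \<in> series \<Delta> \<Longrightarrow> ps_one \<Delta> \<odot> g = g"
proof (rule ext)
  fix a assume g: "g \<in> series \<Delta>"
  show "(ps_one \<Delta> \<odot> g) a = g a"
  proof (cases "a \<in> \<Delta>")
    case False thus ?thesis using g by (simp add: pm_out series_out)
  next
    case True
    have "(ps_one \<Delta> \<odot> g) a = (\<Sum>b\<in>D a. (if b = z then g (map2 (-) a b) else 0))"
      using True z_in_D[OF True] unfolding pm_in[OF True] by (intro sum.cong) (auto simp: one_eq)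
    also have "\<dots> = g a" using True z_in_D[OF True] by (simp only: sum.delta[OF D_finite]) (simp add: sub_z)
    finally show ?thesis .
  qed
qed

lemma one_right: "g \<in> series \<Delta> \<Longrightarrow> g \<odot> ps_one \<Delta> = g"
proof (rule ext)
  fix a assume g: "g \<in> series \<Delta>"
  show "(g \<odot> ps_one \<Delta>) a = g a"
  proof (cases "a \<in> \<Delta>")
    case False thus ?thesis using g by (simp add: pm_out series_out)
  next
    case True
    have "(g \<odot> ps_one \<Delta>) a = (\<Sum>b\<in>D a. g b * ps_one \<Delta> (map2 (-) a b))"
      using True by (simp add: pm_in)
    also have "\<dots> = (\<Sum>b\<in>D a. (if b = a then g b else 0))"
    proof (rule sum.cong)
      fix b assume b: "b \<in> D a"
      have "map2 (-) a b \<in> D a" using b sub_le by auto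
      moreover have "map2 (-) a b = z \<longleftrightarrow> b = a"
      proof
        assume h: "map2 (-) a b = z"
        show "b = a"
        proof (rule nth_equalityI)
          show "length b = length a" using b by (simp add: la2)
          fix j assume j: "j < length b"
          have "map2 (-) a b ! j = z ! j" using h by simp
          hence "a!j - b!j = 0" using j b mem_len[OF True] by (simp add: la2)
          thus "b!j = a!j" using b j by (auto simp: la2)
        qed
      qed (simp add: sub_self True)
      ultimately show "g b * ps_one \<Delta> (map2 (-) a b) = (if b = a then g b else 0)"
        using True by (simp add: one_eq)
    qed simp
    also have "\<dots> = g a" using self_in_D[of a] by (simp only: sum.delta[OF D_finite]) simp
    finally show ?thesis .
  qed
qed

lemma chi_add: "chi i (f + g) = chi i f + chi i g" by (rule ext) (simp add: chi_def distrib_left)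
lemma chi_diff: "chi i (f - g) = chi i f - chi i g" by (rule ext) (simp add: chi_def right_diff_distrib)
lemma chi_uminus: "chi i (- f) = - chi i f" by (rule ext) (simp add: chi_def)
lemma chi_zero[simp]: "chi i 0 = 0" by (rule ext) (simp add: chi_def)
lemma chi_sum: "chi i (\<lambda>a. \<Sum>j\<in>J. g j a) = (\<lambda>a. \<Sum>j\<in>J. chi i (g j) a)"
  by (rule ext) (simp add: chi_def sum_distrib_left)
lemma chi_comm: "chi i (chi j f) = chi j (chi i f)"
  unfolding chi_def by (rule ext) (rule ofn2)
lemma chi_series: "f \<in> series \<Delta> \<Longrightarrow> chi i f \<in> series \<Delta>" by (simp add: series_def chi_def)
lemma chi_one: "i < p \<Longrightarrow> chi i (ps_one \<Delta>) = 0"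
  apply (rule ext) apply (auto simp: chi_def ps_one_def dest!: mem_len) using nth_mem by fastforce

lemma deriv: assumes i: "i < p" shows "chi i (f \<odot> g) = chi i f \<odot> g + f \<odot> chi i g"
proof (rule ext)
  fix a show "chi i (f \<odot> g) a = (chi i f \<odot> g + f \<odot> chi i g) a"
  proof (cases "a \<in> \<Delta>")
    case False thus ?thesis by (simp add: chi_def pm_out)
  next
    case True
    hence la: "length a = p" by (rule mem_len)
    have "chi i (f \<odot> g) a = (\<Sum>b\<in>D a. of_nat (a!i) * (f b * g (map2 (-) a b)))"
      using True by (simp add: chi_def pm_in sum_distrib_left)
    also have "\<dots> = (\<Sum>b\<in>D a. of_nat (b!i) * f b * g (map2 (-) a b) + f b * (of_nat (map2 (-) a b ! i) * g (map2 (-) a b)))"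
    proof (rule sum.cong)
      fix b assume b: "b \<in> D a"
      hence bi: "b!i \<le> a!i" "length b = p" using la i by (auto simp: la2)
      hence e: "(of_nat (a!i) :: 'a) = of_nat (b!i) + of_nat (a!i - b!i)" by (simp flip: of_nat_add)
      have "map2 (-) a b ! i = a!i - b!i" using bi la i by simp
      thus "of_nat (a!i) * (f b * g (map2 (-) a b)) = of_nat (b!i) * f b * g (map2 (-) a b) + f b * (of_nat (map2 (-) a b ! i) * g (map2 (-) a b))"
        unfolding e by (simp add: distrib_right mult.assoc ofn)
    qed simp
    also have "\<dots> = (chi i f \<odot> g + f \<odot> chi i g) a"
      using True by (simp add: pm_in chi_def sum.distrib mult.assoc)
    finally show ?thesis .
  qed
qed

lemma chi_tot_sum: "f \<in> series \<Delta> \<Longrightarrow> chi_tot f = (\<lambda>a. \<Sum>j<p. chi j f a)"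
proof (rule ext)
  fix a assume f: "f \<in> series \<Delta>"
  show "chi_tot f a = (\<Sum>j<p. chi j f a)"
  proof (cases "a \<in> \<Delta>")
    case False thus ?thesis using f by (simp add: chi_def chi_tot_def series_out)
  next
    case True
    thus ?thesis using mem_len[OF True]
      by (simp add: chi_def chi_tot_def sum_list_sum_nth sum_distrib_right atLeast0LessThan)
  qed
qed

end



lemma fix_ex:
  fixes F :: "(nat list \<Rightarrow> 'b) \<Rightarrow> nat list \<Rightarrow> 'b"
  assumes "\<And>f g a. (\<And>b. sum_list b < sum_list a \<Longrightarrow> f b = g b) \<Longrightarrow> F f a = F g a"
  shows "\<exists>s. \<forall>a. s a = F s a"
proof -
  have adm: "adm_wf (measure sum_list) F" unfolding adm_wf_def
  proof (intro allI impI)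
    fix f g :: "nat list \<Rightarrow> 'b" and a :: "nat list"
    assume "\<forall>z. (z, a) \<in> measure sum_list \<longrightarrow> f z = g z"
    thus "F f a = F g a" by (intro assms) simp
  qed
  have e: "wfrec (measure sum_list) F = F (wfrec (measure sum_list) F)" by (rule wfrec_fixpoint[OF wf_measure adm])
  show ?thesis by (rule exI[of _ "wfrec (measure sum_list) F"], rule allI, rule fun_cong[OF e])
qed

context CI begin

lemma one_at: "a \<in> \<Delta> \<Longrightarrow> ps_one \<Delta> a = (if a = z then 1 else 0)"
  using zero_iff[of a] z_in by (auto simp: ps_one_def)
lemma one_series: "ps_one \<Delta> \<in> series \<Delta>" by (simp add: series_def ps_one_def)
lemma U_series: "r \<in> units_U p \<Delta> \<Longrightarrow> r \<in> series \<Delta>" by (simp add: units_U_def)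

lemma sum_list_pos: "a \<in> \<Delta> \<Longrightarrow> a \<noteq> z \<Longrightarrow> 0 < sum_list a"
proof (rule ccontr)
  assume "a \<in> \<Delta>" "a \<noteq> z" "\<not> 0 < sum_list a"
  hence "sum_list a = 0" by simp
  hence "a = replicate (length a) 0" using sum_list_zero_iff by blast
  thus False using \<open>a \<in> \<Delta>\<close> \<open>a \<noteq> z\<close> mem_len by auto
qed

lemma left_inv: assumes r: "r \<in> units_U p \<Delta>" shows "\<exists>s\<in>series \<Delta>. s \<odot> r = ps_one \<Delta>"
proof -
  define F where "F s a = (if a \<in> \<Delta> then (if a = z then 1 else - (\<Sum>b\<in>D a - {a}. s b * r (map2 (-) a b))) else 0)"
    for s :: "nat list \<Rightarrow> 'a" and a
  have "\<exists>s. \<forall>a. s a = F s a"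
  proof (rule fix_ex)
    fix f g :: "nat list \<Rightarrow> 'a" and a assume h: "\<And>b. sum_list b < sum_list a \<Longrightarrow> f b = g b"
    have "(\<Sum>b\<in>D a - {a}. f b * r (map2 (-) a b)) = (\<Sum>b\<in>D a - {a}. g b * r (map2 (-) a b))"
      by (rule sum.cong) (auto simp: h sum_list_less)
    thus "F f a = F g a" by (simp add: F_def)
  qed
  then obtain s where s: "\<And>a. s a = F s a" by blast
  have ss: "s \<in> series \<Delta>" unfolding series_def
  proof (intro CollectI allI impI)
    fix a :: "nat list" assume "a \<notin> \<Delta>" thus "s a = 0" using s[of a] by (simp add: F_def)
  qed
  have "s \<odot> r = ps_one \<Delta>"
  proof (rule ext)
    fix a show "(s \<odot> r) a = ps_one \<Delta> a"
    proof (cases "a \<in> \<Delta>")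
      case False thus ?thesis by (simp add: pm_out ps_one_def)
    next
      case True
      have "(s \<odot> r) a = s a * r (map2 (-) a a) + (\<Sum>b\<in>D a - {a}. s b * r (map2 (-) a b))"
        using True by (simp add: pm_in sum.remove[OF D_finite self_in_D])
      also have "\<dots> = s a + (\<Sum>b\<in>D a - {a}. s b * r (map2 (-) a b))"
        using True r by (simp add: sub_self units_U_def)
      also have "\<dots> = ps_one \<Delta> a"
      proof (cases "a = z")
        case True
        hence e: "D a - {a} = {}" using D_z by auto
        show ?thesis unfolding e using True s[of a] z_in by (simp add: F_def one_at)
      next
        case False thus ?thesis using \<open>a \<in> \<Delta>\<close> s[of a] by (simp add: F_def one_at)
      qed
      finally show ?thesis .
    qed
  qed
  thus ?thesis using ss by blast
qed

lemma right_inv: assumes r: "r \<in> units_U p \<Delta>" shows "\<exists>t\<in>series \<Delta>. r \<odot> t = ps_one \<Delta>"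
proof -
  define F where "F t a = (if a \<in> \<Delta> then (if a = z then 1 else - (\<Sum>b\<in>D a - {z}. r b * t (map2 (-) a b))) else 0)"
    for t :: "nat list \<Rightarrow> 'a" and a
  have "\<exists>t. \<forall>a. t a = F t a"
  proof (rule fix_ex)
    fix f g :: "nat list \<Rightarrow> 'a" and a assume h: "\<And>b. sum_list b < sum_list a \<Longrightarrow> f b = g b"
    show "F f a = F g a"
    proof (cases "a \<in> \<Delta>")
      case a: True
      have "(\<Sum>b\<in>D a - {z}. r b * f (map2 (-) a b)) = (\<Sum>b\<in>D a - {z}. r b * g (map2 (-) a b))"
      proof (rule sum.cong)
        fix b assume b: "b \<in> D a - {z}"
        hence "b \<in> \<Delta>" using a down by auto
        hence "0 < sum_list b" using b sum_list_pos by auto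
        hence "sum_list (map2 (-) a b) < sum_list a" using sum_list_sub[of b a] b by auto
        thus "r b * f (map2 (-) a b) = r b * g (map2 (-) a b)" by (simp add: h)
      qed simp
      thus ?thesis by (simp add: F_def)
    qed (simp add: F_def)
  qed
  then obtain t where t: "\<And>a. t a = F t a" by blast
  have ts: "t \<in> series \<Delta>" unfolding series_def
  proof (intro CollectI allI impI)
    fix a :: "nat list" assume "a \<notin> \<Delta>" thus "t a = 0" using t[of a] by (simp add: F_def)
  qed
  have "r \<odot> t = ps_one \<Delta>"
  proof (rule ext)
    fix a show "(r \<odot> t) a = ps_one \<Delta> a"
    proof (cases "a \<in> \<Delta>")
      case False thus ?thesis by (simp add: pm_out ps_one_def)
    next
      case True
      have "(r \<odot> t) a = r z * t (map2 (-) a z) + (\<Sum>b\<in>D a - {z}. r b * t (map2 (-) a b))"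
        using True by (simp add: pm_in sum.remove[OF D_finite z_in_D])
      also have "\<dots> = t a + (\<Sum>b\<in>D a - {z}. r b * t (map2 (-) a b))"
        using True r by (simp add: sub_z units_U_def)
      also have "\<dots> = ps_one \<Delta> a"
      proof (cases "a = z")
        case True
        hence e: "D a - {z} = {}" using D_z by auto
        show ?thesis unfolding e using True t[of a] z_in by (simp add: F_def one_at)
      next
        case False thus ?thesis using \<open>a \<in> \<Delta>\<close> t[of a] by (simp add: F_def one_at)
      qed
      finally show ?thesis .
    qed
  qed
  thus ?thesis using ts by blast
qed

lemma inv: assumes r: "r \<in> units_U p \<Delta>"
  shows "ps_inv \<Delta> r \<in> series \<Delta> \<and> r \<odot> ps_inv \<Delta> r = ps_one \<Delta> \<and> ps_inv \<Delta> r \<odot> r = ps_one \<Delta>"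
proof -
  obtain s where s: "s \<in> series \<Delta>" "s \<odot> r = ps_one \<Delta>" using left_inv[OF r] by blast
  obtain t where t: "t \<in> series \<Delta>" "r \<odot> t = ps_one \<Delta>" using right_inv[OF r] by blast
  have st: "s = t"
  proof -
    have "s = s \<odot> (r \<odot> t)" using one_right[OF s(1)] t(2) by simp
    also have "\<dots> = t" using one_left[OF t(1)] s(2) by (simp flip: assoc)
    finally show ?thesis .
  qed
  have "ps_inv \<Delta> r = s" unfolding ps_inv_def
  proof (rule the_equality)
    show "s \<in> series \<Delta> \<and> r \<odot> s = ps_one \<Delta> \<and> s \<odot> r = ps_one \<Delta>" using s t st by simp
  next
    fix s' assume "s' \<in> series \<Delta> \<and> r \<odot> s' = ps_one \<Delta> \<and> s' \<odot> r = ps_one \<Delta>"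
    hence s': "s' \<in> series \<Delta>" "r \<odot> s' = ps_one \<Delta>" "s' \<odot> r = ps_one \<Delta>" by auto
    have "s' = s' \<odot> (r \<odot> t)" using one_right[OF s'(1)] t(2) by simp
    also have "\<dots> = t" using one_left[OF t(1)] s'(3) by (simp flip: assoc)
    finally show "s' = s" using st by simp
  qed
  thus ?thesis using s t st by simp
qed

end


context CI begin

lemma chi_tot_series: "f \<in> series \<Delta> \<Longrightarrow> chi_tot f \<in> series \<Delta>" by (simp add: series_def chi_tot_def)
lemma chi_tot_diff: "chi_tot (f - g) = chi_tot f - chi_tot g" by (rule ext) (simp add: chi_tot_def right_diff_distrib)
lemma series_diff: "f \<in> series \<Delta> \<Longrightarrow> g \<in> series \<Delta> \<Longrightarrow> f - g \<in> series \<Delta>" by (simp add: series_def)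

lemma pm_at_z: "(f \<odot> g) z = f z * g z"
  using z_in by (simp add: pm_in D_z sub_self)

lemma kill:
  assumes Q: "\<forall>n>0. \<exists>c::'a::ring_1. c * of_nat n = 1"
    and u: "u \<in> series \<Delta>" "u z = 0" and e: "e z = 0" and eq: "chi_tot u = u \<odot> (e :: nat list \<Rightarrow> 'a)"
  shows "u = 0"
proof -
  have "u a = 0" for a
  proof (induction "sum_list a" arbitrary: a rule: less_induct)
    case less
    show ?case
    proof (cases "a \<in> \<Delta> \<and> a \<noteq> z")
      case False thus ?thesis using u series_out by auto
    next
      case True
      hence a: "a \<in> \<Delta>" "a \<noteq> z" by auto
      define n where "n = sum_list a"
      have n: "0 < n" using sum_list_pos a n_def by auto
      have "of_nat n * u a = (u \<odot> e) a" using fun_cong[OF eq, of a] by (simp add: chi_tot_def n_def)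
      also have "\<dots> = u a * e (map2 (-) a a) + (\<Sum>b\<in>D a - {a}. u b * e (map2 (-) a b))"
        using a by (simp add: pm_in sum.remove[OF D_finite self_in_D])
      also have "\<dots> = 0" using a e by (simp add: sub_self less sum_list_less)
      finally have h: "of_nat n * u a = 0" .
      obtain c :: 'a where "c * of_nat n = 1" using Q n by blast
      hence "u a = c * (of_nat n * u a)" by (simp add: mult.assoc[symmetric])
      thus ?thesis using h by simp
    qed
  qed
  thus ?thesis by (simp add: fun_eq_iff)
qed

lemma eps_exists:
  assumes Q: "\<forall>n>0. \<exists>c::'a::ring_1. c * of_nat n = 1"
    and e: "(e :: nat list \<Rightarrow> 'a) \<in> series_plus p \<Delta>"
  shows "\<exists>r\<in>units_U p \<Delta>. chi_tot r = r \<odot> e"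
proof -
  define ci :: "nat \<Rightarrow> 'a" where "ci n = (SOME c. c * of_nat n = 1)" for n
  have ci: "0 < n \<Longrightarrow> of_nat n * ci n = 1" for n
    using someI_ex[of "\<lambda>c::'a. c * of_nat n = 1"] Q unfolding ci_def by (metis mult_of_nat_commute)
  define F where "F r a = (if a \<in> \<Delta> then (if a = z then 1 else ci (sum_list a) * (\<Sum>b\<in>D a - {a}. r b * e (map2 (-) a b))) else 0)"
    for r :: "nat list \<Rightarrow> 'a" and a
  have "\<exists>r. \<forall>a. r a = F r a"
  proof (rule fix_ex)
    fix f g :: "nat list \<Rightarrow> 'a" and a assume h: "\<And>b. sum_list b < sum_list a \<Longrightarrow> f b = g b"
    have "(\<Sum>b\<in>D a - {a}. f b * e (map2 (-) a b)) = (\<Sum>b\<in>D a - {a}. g b * e (map2 (-) a b))"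
      by (rule sum.cong) (auto simp: h sum_list_less)
    thus "F f a = F g a" by (simp add: F_def)
  qed
  then obtain r where r: "\<And>a. r a = F r a" by blast
  have rs: "r \<in> series \<Delta>" unfolding series_def
  proof (intro CollectI allI impI)
    fix a :: "nat list" assume "a \<notin> \<Delta>" thus "r a = 0" using r[of a] by (simp add: F_def)
  qed
  have rU: "r \<in> units_U p \<Delta>" using rs r[of z] z_in by (simp add: units_U_def F_def)
  have ez: "e z = 0" and es: "e \<in> series \<Delta>" using e by (auto simp: series_plus_def)
  have "chi_tot r = r \<odot> e"
  proof (rule ext)
    fix a show "chi_tot r a = (r \<odot> e) a"
    proof (cases "a \<in> \<Delta>")
      case False thus ?thesis using rs by (simp add: chi_tot_def pm_out series_out)
    next
      case True
      have eq: "(r \<odot> e) a = r a * e (map2 (-) a a) + (\<Sum>b\<in>D a - {a}. r b * e (map2 (-) a b))"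
        using True by (simp add: pm_in sum.remove[OF D_finite self_in_D])
      show ?thesis
      proof (cases "a = z")
        case True
        thus ?thesis using ez by (simp add: pm_at_z chi_tot_def sum_list_replicate)
      next
        case False
        have n: "0 < sum_list a" using sum_list_pos \<open>a \<in> \<Delta>\<close> False by auto
        have "chi_tot r a = of_nat (sum_list a) * ci (sum_list a) * (\<Sum>b\<in>D a - {a}. r b * e (map2 (-) a b))"
          using r[of a] \<open>a \<in> \<Delta>\<close> False by (simp add: chi_tot_def F_def mult.assoc)
        also have "\<dots> = (r \<odot> e) a" using eq ci[OF n] ez \<open>a \<in> \<Delta>\<close> by (simp add: sub_self)
        finally show ?thesis .
      qed
    qed
  qed
  thus ?thesis using rU by blast
qed

lemma eps_char: assumes r: "r \<in> units_U p \<Delta>" shows "r \<odot> eps \<Delta> r = chi_tot r"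
proof -
  have "r \<odot> eps \<Delta> r = (r \<odot> ps_inv \<Delta> r) \<odot> chi_tot r" by (simp add: eps_def assoc)
  also have "\<dots> = chi_tot r" using inv[OF r] one_left[OF chi_tot_series[OF U_series[OF r]]] by simp
  finally show ?thesis .
qed

lemma eps_i_char: assumes r: "r \<in> units_U p \<Delta>" shows "r \<odot> eps_i i \<Delta> r = chi i r"
proof -
  have "r \<odot> eps_i i \<Delta> r = (r \<odot> ps_inv \<Delta> r) \<odot> chi i r" by (simp add: eps_i_def assoc)
  also have "\<dots> = chi i r" using inv[OF r] one_left[OF chi_series[OF U_series[OF r]]] by simp
  finally show ?thesis .
qed

lemma eps_from: "r \<in> units_U p \<Delta> \<Longrightarrow> e \<in> series \<Delta> \<Longrightarrow> chi_tot r = r \<odot> e \<Longrightarrow> eps \<Delta> r = e"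
  unfolding eps_def using inv[of r] one_left[of e] by (simp flip: assoc)

lemma eps_i_from: "r \<in> units_U p \<Delta> \<Longrightarrow> e \<in> series \<Delta> \<Longrightarrow> chi i r = r \<odot> e \<Longrightarrow> eps_i i \<Delta> r = e"
  unfolding eps_i_def using inv[of r] one_left[of e] by (simp flip: assoc)

lemma eps_sp: "r \<in> units_U p \<Delta> \<Longrightarrow> eps \<Delta> r \<in> series_plus p \<Delta>"
  by (simp add: series_plus_def eps_def pm_at_z chi_tot_def sum_list_replicate)

lemma eps_i_sp: "i < p \<Longrightarrow> eps_i i \<Delta> r \<in> series_plus p \<Delta>"
  by (simp add: series_plus_def eps_i_def pm_at_z chi_def)

lemma eps_i_zero: assumes i: "i < p" and a: "a ! i = 0" shows "eps_i i \<Delta> r a = 0"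
proof (cases "a \<in> \<Delta>")
  case False thus ?thesis by (simp add: eps_i_def pm_out)
next
  case True
  have "\<And>b. b \<in> D a \<Longrightarrow> map2 (-) a b ! i = 0" using a i mem_len[OF True] by (auto simp: la2)
  thus ?thesis using True by (simp add: eps_i_def pm_in chi_def)
qed

lemma eps_inj:
  assumes Q: "\<forall>n>0. \<exists>c::'a::ring_1. c * of_nat n = 1"
    and r: "(r :: nat list \<Rightarrow> 'a) \<in> units_U p \<Delta>" and r': "r' \<in> units_U p \<Delta>" and eq: "eps \<Delta> r = eps \<Delta> r'"
  shows "r = r'"
proof -
  define e where "e = eps \<Delta> r"
  have "r - r' = 0"
  proof (rule kill[OF Q])
    show "r - r' \<in> series \<Delta>" using r r' by (simp add: series_diff U_series)
    show "(r - r') z = 0" using r r' by (simp add: units_U_def)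
    show "e z = 0" using eps_sp[OF r] by (simp add: e_def series_plus_def)
    show "chi_tot (r - r') = (r - r') \<odot> e"
      using eps_char[OF r] eps_char[OF r'] eq by (simp add: chi_tot_diff diff_left e_def)
  qed
  thus ?thesis by simp
qed

end


context CI begin

lemma integ:
  assumes r: "r \<in> units_U p \<Delta>" and i: "i < p" and j: "j < p"
  shows "chi j (eps_i i \<Delta> r) - chi i (eps_i j \<Delta> r) = eps_i i \<Delta> r \<odot> eps_i j \<Delta> r - eps_i j \<Delta> r \<odot> eps_i i \<Delta> r"
proof -
  define s where "s = ps_inv \<Delta> r"
  have ss: "s \<in> series \<Delta>" and rs: "r \<odot> s = ps_one \<Delta>" and sr: "s \<odot> r = ps_one \<Delta>"
    using inv[OF r] by (auto simp: s_def)
  have chis: "chi k s = - (eps_i k \<Delta> r \<odot> s)" if k: "k < p" for k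
  proof -
    have "chi k (s \<odot> r) = 0" using sr chi_one[OF k] by simp
    hence "chi k s \<odot> r + s \<odot> chi k r = 0" by (simp add: deriv[OF k])
    hence "(chi k s \<odot> r + s \<odot> chi k r) \<odot> s = 0" by simp
    hence "chi k s \<odot> (r \<odot> s) + (s \<odot> chi k r) \<odot> s = 0" by (simp add: add_left assoc)
    hence "chi k s + eps_i k \<Delta> r \<odot> s = 0" using rs one_right[OF chi_series[OF ss]] by (simp add: eps_i_def s_def)
    thus ?thesis by (simp add: eq_neg_iff_add_eq_0)
  qed
  have ce: "chi b (eps_i a \<Delta> r) = - (eps_i b \<Delta> r \<odot> eps_i a \<Delta> r) + s \<odot> chi b (chi a r)" if "a < p" "b < p" for a b
  proof -
    have "chi b (eps_i a \<Delta> r) = chi b s \<odot> chi a r + s \<odot> chi b (chi a r)"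
      by (simp add: eps_i_def s_def[symmetric] deriv[OF that(2)])
    also have "\<dots> = - (eps_i b \<Delta> r \<odot> eps_i a \<Delta> r) + s \<odot> chi b (chi a r)"
      by (simp add: chis[OF that(2)] uminus_left assoc) (simp add: eps_i_def s_def)
    finally show ?thesis .
  qed
  show ?thesis using ce[OF i j] ce[OF j i] chi_comm[of i j r] by (simp add: algebra_simps)
qed

lemma bold_nth: "i < p \<Longrightarrow> bold_eps p \<Delta> r ! i = eps_i i \<Delta> r" by (simp add: bold_eps_def)

lemma bold_HS: assumes r: "r \<in> units_U p \<Delta>" shows "bold_eps p \<Delta> r \<in> HS p \<Delta>"
  unfolding HS_def
proof (intro CollectI conjI allI impI)
  show "length (bold_eps p \<Delta> r) = p" by (simp add: bold_eps_def)
next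
  fix i assume "i < p" thus "bold_eps p \<Delta> r ! i \<in> series_plus p \<Delta>" by (simp add: bold_nth eps_i_sp)
next
  fix i and a :: "nat list" assume "i < p" "a ! i = 0" thus "(bold_eps p \<Delta> r ! i) a = 0" by (simp add: bold_nth eps_i_zero)
next
  fix i j assume ij: "i < p" "j < p"
  show "(\<lambda>\<alpha>. chi j (bold_eps p \<Delta> r ! i) \<alpha> - chi i (bold_eps p \<Delta> r ! j) \<alpha>) =
         ps_bracket \<Delta> (bold_eps p \<Delta> r ! i) (bold_eps p \<Delta> r ! j)"
  proof (rule ext)
    fix a show "chi j (bold_eps p \<Delta> r ! i) a - chi i (bold_eps p \<Delta> r ! j) a = ps_bracket \<Delta> (bold_eps p \<Delta> r ! i) (bold_eps p \<Delta> r ! j) a"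
      using fun_cong[OF integ[OF r ij], of a] ij by (simp add: bold_nth ps_bracket_def)
  qed
qed

lemma Sigma_bold: assumes r: "r \<in> units_U p \<Delta>" shows "Sigma_map p (bold_eps p \<Delta> r) = eps \<Delta> r"
proof -
  have "Sigma_map p (bold_eps p \<Delta> r) = (\<lambda>a. \<Sum>i<p. (ps_inv \<Delta> r \<odot> chi i r) a)"
    by (simp add: Sigma_map_def bold_nth eps_i_def)
  also have "\<dots> = ps_inv \<Delta> r \<odot> (\<lambda>a. \<Sum>i<p. chi i r a)" by (simp add: sum_right)
  also have "\<dots> = eps \<Delta> r" by (simp add: eps_def chi_tot_sum[OF U_series[OF r]])
  finally show ?thesis .
qed

lemma Sigma_sp: "ds \<in> HS p \<Delta> \<Longrightarrow> Sigma_map p ds \<in> series_plus p \<Delta>"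
  by (auto simp: HS_def series_plus_def series_def Sigma_map_def)

lemma HS_surj:
  assumes Q: "\<forall>n>0. \<exists>c::'a::ring_1. c * of_nat n = 1"
    and ds: "(ds :: (nat list \<Rightarrow> 'a) list) \<in> HS p \<Delta>"
  shows "\<exists>r\<in>units_U p \<Delta>. bold_eps p \<Delta> r = ds"
proof -
  define \<delta> where "\<delta> k = ds ! k" for k
  define e where "e = Sigma_map p ds"
  have esp: "e \<in> series_plus p \<Delta>" using Sigma_sp[OF ds] by (simp add: e_def)
  have ez: "e z = 0" using esp by (simp add: series_plus_def)
  have e_eq: "e = (\<lambda>a. \<Sum>k<p. \<delta> k a)" by (simp add: e_def Sigma_map_def \<delta>_def)
  have len: "length ds = p" using ds unfolding HS_def by blast
  have dsp: "\<And>k. k < p \<Longrightarrow> ds ! k \<in> series_plus p \<Delta>" using ds unfolding HS_def by blast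
  have dsb: "\<And>i j. i < p \<Longrightarrow> j < p \<Longrightarrow> (\<lambda>\<alpha>. chi j (ds ! i) \<alpha> - chi i (ds ! j) \<alpha>) = ps_bracket \<Delta> (ds ! i) (ds ! j)"
    using ds unfolding HS_def by blast
  have \<delta>s: "\<delta> k \<in> series \<Delta>" "\<delta> k z = 0" if "k < p" for k
    using dsp[OF that] by (auto simp: \<delta>_def series_plus_def)
  have hs: "chi j (\<delta> i) = chi i (\<delta> j) + (\<delta> i \<odot> \<delta> j - \<delta> j \<odot> \<delta> i)" if "i < p" "j < p" for i j
  proof (rule ext)
    fix a
    have "(\<lambda>\<alpha>. chi j (\<delta> i) \<alpha> - chi i (\<delta> j) \<alpha>) = ps_bracket \<Delta> (\<delta> i) (\<delta> j)"
      using dsb[OF that] by (simp add: \<delta>_def)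
    from fun_cong[OF this, of a] show "chi j (\<delta> i) a = (chi i (\<delta> j) + (\<delta> i \<odot> \<delta> j - \<delta> j \<odot> \<delta> i)) a"
      by (simp add: ps_bracket_def algebra_simps)
  qed
  obtain r where rU: "r \<in> units_U p \<Delta>" and rchi: "chi_tot r = r \<odot> e" using eps_exists[OF Q esp] by blast
  have rs: "r \<in> series \<Delta>" using rU by (rule U_series)
  define u where "u k = chi k r - r \<odot> \<delta> k" for k
  have cr: "chi k r = u k + r \<odot> \<delta> k" for k by (simp add: u_def)
  have c1: "chi j (u i) = chi j (chi i r) - u j \<odot> \<delta> i - r \<odot> chi i (\<delta> j) - r \<odot> (\<delta> i \<odot> \<delta> j)"
    if ij: "i < p" "j < p" for i j
  proof -
    have "chi j (u i) = chi j (chi i r) - (chi j r \<odot> \<delta> i + r \<odot> chi j (\<delta> i))"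
      by (simp add: u_def chi_diff deriv[OF ij(2)])
    also have "\<dots> = chi j (chi i r) - ((u j + r \<odot> \<delta> j) \<odot> \<delta> i + r \<odot> (chi i (\<delta> j) + (\<delta> i \<odot> \<delta> j - \<delta> j \<odot> \<delta> i)))"
      by (simp only: cr[of j] hs[OF ij])
    also have "\<dots> = chi j (chi i r) - u j \<odot> \<delta> i - r \<odot> chi i (\<delta> j) - r \<odot> (\<delta> i \<odot> \<delta> j)"
      by (simp add: add_left add_right diff_right assoc algebra_simps)
    finally show ?thesis .
  qed
  have c2: "chi i (u j) = chi j (chi i r) - u i \<odot> \<delta> j - r \<odot> chi i (\<delta> j) - r \<odot> (\<delta> i \<odot> \<delta> j)"
    if ij: "i < p" "j < p" for i j
  proof -
    have "chi i (u j) = chi i (chi j r) - (chi i r \<odot> \<delta> j + r \<odot> chi i (\<delta> j))"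
      by (simp add: u_def chi_diff deriv[OF ij(1)])
    also have "\<dots> = chi j (chi i r) - ((u i + r \<odot> \<delta> i) \<odot> \<delta> j + r \<odot> chi i (\<delta> j))"
      by (simp only: cr[of i] chi_comm[of i j r])
    also have "\<dots> = chi j (chi i r) - u i \<odot> \<delta> j - r \<odot> chi i (\<delta> j) - r \<odot> (\<delta> i \<odot> \<delta> j)"
      by (simp add: add_left assoc algebra_simps)
    finally show ?thesis .
  qed
  have c3: "chi j (u i) = chi i (u j) + u i \<odot> \<delta> j - u j \<odot> \<delta> i" if ij: "i < p" "j < p" for i j
    by (simp only: c1[OF ij] c2[OF ij]) (simp add: algebra_simps)
  have sumu: "(\<lambda>a. \<Sum>k<p. u k a) = 0"
  proof -
    have "(\<lambda>a. \<Sum>k<p. u k a) = (\<lambda>a. \<Sum>k<p. chi k r a) - (\<lambda>a. \<Sum>k<p. (r \<odot> \<delta> k) a)"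
      by (simp add: u_def fun_eq_iff sum_subtractf)
    also have "\<dots> = chi_tot r - r \<odot> e" by (simp add: chi_tot_sum[OF rs] sum_right e_eq)
    finally show ?thesis using rchi by simp
  qed
  have u0: "u i = 0" if i: "i < p" for i
  proof (rule kill[OF Q])
    show "u i \<in> series \<Delta>" by (simp add: u_def series_diff chi_series rs)
    show "u i z = 0" using i \<delta>s[OF i] by (simp add: u_def chi_def pm_at_z)
    show "e z = 0" by (rule ez)
    have "chi_tot (u i) = (\<lambda>a. \<Sum>j<p. chi j (u i) a)" by (rule chi_tot_sum) (simp add: u_def series_diff chi_series rs)
    also have "\<dots> = (\<lambda>a. \<Sum>j<p. chi i (u j) a + (u i \<odot> \<delta> j) a - (u j \<odot> \<delta> i) a)"
    proof (rule ext, rule sum.cong)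
      fix a j assume "j \<in> {..<p}"
      hence j: "j < p" by simp
      show "chi j (u i) a = chi i (u j) a + (u i \<odot> \<delta> j) a - (u j \<odot> \<delta> i) a"
        using fun_cong[OF c3[OF i j], of a] by simp
    qed simp
    also have "\<dots> = chi i (\<lambda>a. \<Sum>j<p. u j a) + u i \<odot> (\<lambda>a. \<Sum>j<p. \<delta> j a) - (\<lambda>a. \<Sum>j<p. u j a) \<odot> \<delta> i"
      by (simp add: chi_sum sum_right sum_left fun_eq_iff sum.distrib sum_subtractf)
    also have "\<dots> = u i \<odot> e" using sumu by (simp add: e_eq)
    finally show "chi_tot (u i) = u i \<odot> e" .
  qed
  have "bold_eps p \<Delta> r = ds"
  proof (rule nth_equalityI)
    show "length (bold_eps p \<Delta> r) = length ds" using len by (simp add: bold_eps_def)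
    fix i assume "i < length (bold_eps p \<Delta> r)"
    hence i: "i < p" by (simp add: bold_eps_def)
    have "chi i r = r \<odot> \<delta> i" using u0[OF i] by (simp add: u_def)
    hence "eps_i i \<Delta> r = \<delta> i" using eps_i_from[OF rU \<delta>s(1)[OF i]] by simp
    thus "bold_eps p \<Delta> r ! i = ds ! i" using i by (simp add: bold_nth \<delta>_def)
  qed
  thus ?thesis using rU by blast
qed

end



theorem mainTheorem6:
  fixes \<psi> :: "rat \<Rightarrow> 'k::comm_ring_1" and \<phi> :: "'k \<Rightarrow> 'r::ring_1"
    and p :: nat and \<Delta> :: "nat list set"
  assumes Q_sub_k: "inj \<psi>" "\<psi> 1 = 1" "\<And>a b. \<psi> (a + b) = \<psi> a + \<psi> b" "\<And>a b. \<psi> (a * b) = \<psi> a * \<psi> b"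
    and k_alg: "\<phi> 1 = 1" "\<And>a b. \<phi> (a + b) = \<phi> a + \<phi> b" "\<And>a b. \<phi> (a * b) = \<phi> a * \<phi> b"
      "\<And>a x. \<phi> a * x = x * \<phi> a"
    and \<Delta>: "coideal p \<Delta>"
  shows "(\<forall>r\<in>(units_U p \<Delta> :: (nat list \<Rightarrow> 'r) set).
            eps \<Delta> r \<in> series_plus p \<Delta> \<and> bold_eps p \<Delta> r \<in> HS p \<Delta> \<and>
            Sigma_map p (bold_eps p \<Delta> r) = eps \<Delta> r)
     \<and> bij_betw (bold_eps p \<Delta>) (units_U p \<Delta> :: (nat list \<Rightarrow> 'r) set) (HS p \<Delta>)
     \<and> bij_betw (eps \<Delta>) (units_U p \<Delta> :: (nat list \<Rightarrow> 'r) set) (series_plus p \<Delta>)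
     \<and> bij_betw (Sigma_map p) (HS p \<Delta> :: (nat list \<Rightarrow> 'r) list set) (series_plus p \<Delta>)"
proof -
  interpret CI p \<Delta> by (rule CI.intro) (rule \<Delta>)
  have psi0: "\<psi> 0 = 0" using Q_sub_k(3)[of 0 0] by simp
  have phi0: "\<phi> 0 = 0" using k_alg(2)[of 0 0] by simp
  have psin: "\<psi> (of_nat n) = of_nat n" for n
    by (induction n) (simp_all add: psi0 Q_sub_k(2) Q_sub_k(3)[of 1, simplified add.commute] add.commute)
  have phin: "\<phi> (of_nat n) = of_nat n" for n
    by (induction n) (simp_all add: phi0 k_alg(1) k_alg(2)[of 1, simplified add.commute] add.commute)
  have Q: "\<forall>n>0. \<exists>c::'r. c * of_nat n = 1"
  proof (intro allI impI)
    fix n :: nat assume n: "0 < n"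
    have "\<phi> (\<psi> (1 / of_nat n)) * of_nat n = \<phi> (\<psi> (1 / of_nat n)) * \<phi> (\<psi> (of_nat n))"
      by (simp add: psin phin)
    also have "\<dots> = \<phi> (\<psi> (1 / of_nat n * of_nat n))" by (simp only: k_alg(3)[symmetric] Q_sub_k(4)[symmetric])
    also have "\<dots> = 1" using n by (simp add: Q_sub_k(2) k_alg(1))
    finally show "\<exists>c::'r. c * of_nat n = 1" by blast
  qed
  have P1: "\<forall>r\<in>(units_U p \<Delta> :: (nat list \<Rightarrow> 'r) set).
            eps \<Delta> r \<in> series_plus p \<Delta> \<and> bold_eps p \<Delta> r \<in> HS p \<Delta> \<and>
            Sigma_map p (bold_eps p \<Delta> r) = eps \<Delta> r"
    using eps_sp bold_HS Sigma_bold by blast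
  have epsim: "eps \<Delta> ` (units_U p \<Delta> :: (nat list \<Rightarrow> 'r) set) = series_plus p \<Delta>"
  proof
    show "eps \<Delta> ` units_U p \<Delta> \<subseteq> series_plus p \<Delta>" using eps_sp by blast
    show "series_plus p \<Delta> \<subseteq> eps \<Delta> ` (units_U p \<Delta> :: (nat list \<Rightarrow> 'r) set)"
    proof
      fix e :: "nat list \<Rightarrow> 'r" assume e: "e \<in> series_plus p \<Delta>"
      obtain r where r: "r \<in> units_U p \<Delta>" "chi_tot r = r \<odot> e" using eps_exists[OF Q e] by blast
      have "e \<in> series \<Delta>" using e by (simp add: series_plus_def)
      hence "eps \<Delta> r = e" using eps_from[OF r(1) _ r(2)] by simp
      thus "e \<in> eps \<Delta> ` units_U p \<Delta>" using r(1) by blast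
    qed
  qed
  have epsinj: "inj_on (eps \<Delta>) (units_U p \<Delta> :: (nat list \<Rightarrow> 'r) set)"
    by (rule inj_onI) (rule eps_inj[OF Q])
  have P2: "bij_betw (bold_eps p \<Delta>) (units_U p \<Delta> :: (nat list \<Rightarrow> 'r) set) (HS p \<Delta>)"
    unfolding bij_betw_def
  proof
    show "inj_on (bold_eps p \<Delta>) (units_U p \<Delta> :: (nat list \<Rightarrow> 'r) set)"
    proof (rule inj_onI)
      fix r r' :: "nat list \<Rightarrow> 'r" assume "r \<in> units_U p \<Delta>" "r' \<in> units_U p \<Delta>" "bold_eps p \<Delta> r = bold_eps p \<Delta> r'"
      thus "r = r'" using Sigma_bold eps_inj[OF Q] by metis
    qed
    show "bold_eps p \<Delta> ` units_U p \<Delta> = (HS p \<Delta> :: (nat list \<Rightarrow> 'r) list set)"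
      using bold_HS HS_surj[OF Q] by blast
  qed
  have P4: "bij_betw (Sigma_map p) (HS p \<Delta> :: (nat list \<Rightarrow> 'r) list set) (series_plus p \<Delta>)"
    unfolding bij_betw_def
  proof
    show "inj_on (Sigma_map p) (HS p \<Delta> :: (nat list \<Rightarrow> 'r) list set)"
    proof (rule inj_onI)
      fix ds ds' :: "(nat list \<Rightarrow> 'r) list" assume h: "ds \<in> HS p \<Delta>" "ds' \<in> HS p \<Delta>" "Sigma_map p ds = Sigma_map p ds'"
      obtain r where r: "r \<in> units_U p \<Delta>" "bold_eps p \<Delta> r = ds" using HS_surj[OF Q h(1)] by blast
      obtain r' where r': "r' \<in> units_U p \<Delta>" "bold_eps p \<Delta> r' = ds'" using HS_surj[OF Q h(2)] by blast
      have "eps \<Delta> r = eps \<Delta> r'" using Sigma_bold[OF r(1)] Sigma_bold[OF r'(1)] r(2) r'(2) h(3) by simp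
      hence "r = r'" using eps_inj[OF Q r(1) r'(1)] by simp
      thus "ds = ds'" using r r' by simp
    qed
    show "Sigma_map p ` (HS p \<Delta> :: (nat list \<Rightarrow> 'r) list set) = series_plus p \<Delta>"
    proof
      show "Sigma_map p ` (HS p \<Delta> :: (nat list \<Rightarrow> 'r) list set) \<subseteq> series_plus p \<Delta>" using Sigma_sp by blast
      show "series_plus p \<Delta> \<subseteq> Sigma_map p ` (HS p \<Delta> :: (nat list \<Rightarrow> 'r) list set)"
      proof
        fix e :: "nat list \<Rightarrow> 'r" assume "e \<in> series_plus p \<Delta>"
        then obtain r where r: "r \<in> units_U p \<Delta>" "e = eps \<Delta> r" using epsim by blast
        thus "e \<in> Sigma_map p ` HS p \<Delta>" using Sigma_bold[OF r(1)] bold_HS[OF r(1)] by (metis image_eqI)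
      qed
    qed
  qed
  show ?thesis using P1 P2 P4 epsinj epsim by (simp add: bij_betw_def)
qed


end
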